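(* Assume (A-f), (A-J), (A-TW), (A-nd), and $J\in\mathbb{B}^\alpha_{1,\infty}(\Omega;\delta)$ for some $\alpha\in(0,1)$; let $(\phi,c)$ be as in (A-TW). Let $u(t,x)$ be the unique entire solution of $\partial_tu=Lu+f(u)$ in $\mathbb{R}\times\overline\Omega$ such that $0<u<1$ and $\partial_tu>0$ in $\mathbb{R}\times\overline\Omega$ and $|u(t,x)-\phi(x_1+ct)|\to0$ as $t\to-\infty$ uniformly in $x\in\overline\Omega$. Then, writing $x=(x_1,x')\in\mathbb{R}\times\mathbb{R}^{N-1}$, $$\lim_{x_1\to-\infty}u(t,x)=0\quad\text{and}\quad\lim_{x_1\to+\infty}u(t,x)=1\quad\text{for all }(t,x')\in\mathbb{R}\times\mathbb{R}^{N-1}.$$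
   Context: $K\subset\mathbb{R}^N$ is compact and $\Omega:=\mathbb{R}^N\setminus K$ is connected. A distance $\delta$ on $E\subset\mathbb{R}^N$ is quasi-Euclidean if $\delta(x,y)=|x-y|$ whenever $[x,y]\subset E$ and $\delta(x,y)\ge|x-y|$ for all $x,y\in E$; $\delta$ is a quasi-Euclidean distance on $\overline\Omega$. For measurable $J:[0,\infty)\to[0,\infty)$ with $|\mathrm{supp}(J)|>0$ and $x\in\overline\Omega$, $\Pi_0(J,x)=\{x\}$, $\Pi_{j+1}(J,x)=\bigcup_{z\in\Pi_j(J,x)}\mathrm{supp}(J(\delta(\cdot,z)))$; $(\Omega,\delta)$ has the $J$-covering property if $\overline\Omega=\bigcup_{j}\Pi_j(J,x)$ for all $x\in\overline\Omega$. Notation: $J_{\mathrm{rad}}(z)=J(|z|)$, $\mathcal{J}^\delta(x)=\int_\Omega J(\delta(x,z))dz$, $J_1(s)=\int_{\mathbb{R}^{N-1}}J_{\mathrm{rad}}(s,y')dy'$, $Lu(x)=\int_\Omega J(\delta(x,y))(u(y)-u(x))dy$. (A-f): $f:[0,1]\to\mathbb{R}$, $f\in C^{1,1}([0,1])$, $\exists\theta\in(0,1)$: $f(0)=f(\theta)=f(1)=0$, $f<0$ on $(0,\theta)$, $f>0$ on $(\theta,1)$, $f'(0)<0$, $f'(\theta)>0$, $f'(1)<0$. (A-J): $J$ measurable, compactly supported, $|\mathrm{supp}J|>0$; $(\Omega,\delta)$ has the $J$-covering property; $\int_{\mathbb{R}^N}J_{\mathrm{rad}}=1$; for every $y\in\overline\Omega$,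 $\|J(\delta(y,\cdot))-J(\delta(z,\cdot))\|_{L^1(\Omega)}\to0$ as $z\to y$; $\mathcal{J}^\delta\in L^\infty(\Omega)$. (A-TW): there exist increasing $\phi\in C(\mathbb{R})$, $c>0$ with $c\phi'=J_1*\phi-\phi+f(\phi)$, $\phi(-\infty)=0$, $\phi(+\infty)=1$. (A-nd): $\max_{[0,1]}f'<\inf_\Omega\mathcal{J}^\delta$. $\mathbb{B}^\alpha_{1,\infty}(\Omega;\delta)$: $g:[0,\infty)\to\mathbb{R}$ with $g(|\cdot|)\in L^1(\mathbb{R}^N)$ and $\sup_{y\ne z\in\Omega}\|g(\delta(y,\cdot))-g(\delta(z,\cdot))\|_{L^1(\Omega)}/|y-z|^\alpha<\infty$. *)

theory Defs
  imports "HOL-Analysis.Analysis"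
begin

(* Space R^N is modelled as real \<times> 'm with 'm a Euclidean space of dimension N-1;
   the first component is the coordinate x_1. *)

definition distance_on :: "'a set \<Rightarrow> ('a \<Rightarrow> 'a \<Rightarrow> real) \<Rightarrow> bool" where
  "distance_on E \<delta> \<longleftrightarrow>
     (\<forall>x\<in>E. \<forall>y\<in>E. \<delta> x y = 0 \<longleftrightarrow> x = y) \<and>
     (\<forall>x\<in>E. \<forall>y\<in>E. \<delta> x y = \<delta> y x) \<and>
     (\<forall>x\<in>E. \<forall>y\<in>E. \<forall>z\<in>E. \<delta> x z \<le> \<delta> x y + \<delta> y z)"

definition quasi_euclidean :: "'a::euclidean_space set \<Rightarrow> ('a \<Rightarrow> 'a \<Rightarrow> real) \<Rightarrow> bool" where
  "quasi_euclidean E \<delta> \<longleftrightarrow> distance_on E \<delta> \<and>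
     (\<forall>x\<in>E. \<forall>y\<in>E. closed_segment x y \<subseteq> E \<longrightarrow> \<delta> x y = dist x y) \<and>
     (\<forall>x\<in>E. \<forall>y\<in>E. \<delta> x y \<ge> dist x y)"

definition supp_on :: "'a::topological_space set \<Rightarrow> ('a \<Rightarrow> real) \<Rightarrow> 'a set" where
  "supp_on E g = closure {y\<in>E. g y \<noteq> 0}"

fun Pi_J :: "(real \<Rightarrow> real) \<Rightarrow> ('a \<Rightarrow> 'a \<Rightarrow> real) \<Rightarrow> 'a::topological_space set \<Rightarrow> nat \<Rightarrow> 'a \<Rightarrow> 'a set" where
  "Pi_J J \<delta> E 0 x = {x}"
| "Pi_J J \<delta> E (Suc j) x = (\<Union>z\<in>Pi_J J \<delta> E j x. supp_on E (\<lambda>y. J (\<delta> y z)))"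

definition J_covering :: "(real \<Rightarrow> real) \<Rightarrow> ('a \<Rightarrow> 'a \<Rightarrow> real) \<Rightarrow> 'a::topological_space set \<Rightarrow> bool" where
  "J_covering J \<delta> \<Omega> \<longleftrightarrow> (\<forall>x\<in>closure \<Omega>. closure \<Omega> = (\<Union>j. Pi_J J \<delta> (closure \<Omega>) j x))"

definition calJ :: "(real \<Rightarrow> real) \<Rightarrow> ('a \<Rightarrow> 'a \<Rightarrow> real) \<Rightarrow> 'a::euclidean_space set \<Rightarrow> 'a \<Rightarrow> ennreal" where
  "calJ J \<delta> \<Omega> x = (\<integral>\<^sup>+ z. ennreal (J (\<delta> x z)) * indicator \<Omega> z \<partial>lborel)"

definition L1dist_on :: "'a::euclidean_space set \<Rightarrow> ('a \<Rightarrow> real) \<Rightarrow> ('a \<Rightarrow> real) \<Rightarrow> ennreal" where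
  "L1dist_on \<Omega> g h = (\<integral>\<^sup>+ w. ennreal \<bar>g w - h w\<bar> * indicator \<Omega> w \<partial>lborel)"

definition J1 :: "(real \<Rightarrow> real) \<Rightarrow> 'm::euclidean_space itself \<Rightarrow> real \<Rightarrow> real" where
  "J1 J _ s = (\<integral> y. J (norm (s, y::'m)) \<partial>lborel)"

definition conv :: "(real \<Rightarrow> real) \<Rightarrow> (real \<Rightarrow> real) \<Rightarrow> real \<Rightarrow> real" where
  "conv g h s = (\<integral> r. g r * h (s - r) \<partial>lborel)"

definition Lop :: "(real \<Rightarrow> real) \<Rightarrow> ('a \<Rightarrow> 'a \<Rightarrow> real) \<Rightarrow> 'a::euclidean_space set \<Rightarrow> ('a \<Rightarrow> real) \<Rightarrow> 'a \<Rightarrow> real" where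
  "Lop J \<delta> \<Omega> v x = (\<integral> y. indicator \<Omega> y * (J (\<delta> x y) * (v y - v x)) \<partial>lborel)"

definition A_f :: "(real \<Rightarrow> real) \<Rightarrow> (real \<Rightarrow> real) \<Rightarrow> real \<Rightarrow> bool" where
  "A_f f f' \<theta> \<longleftrightarrow>
     (\<forall>s\<in>{0..1}. (f has_real_derivative f' s) (at s within {0..1})) \<and>
     (\<exists>Lc. \<forall>s\<in>{0..1}. \<forall>t\<in>{0..1}. \<bar>f' s - f' t\<bar> \<le> Lc * \<bar>s - t\<bar>) \<and>
     0 < \<theta> \<and> \<theta> < 1 \<and> f 0 = 0 \<and> f \<theta> = 0 \<and> f 1 = 0 \<and>
     (\<forall>s\<in>{0<..<\<theta>}. f s < 0) \<and> (\<forall>s\<in>{\<theta><..<1}. f s > 0) \<and>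
     f' 0 < 0 \<and> f' \<theta> > 0 \<and> f' 1 < 0"

definition A_J :: "(real \<Rightarrow> real) \<Rightarrow> ('a \<Rightarrow> 'a \<Rightarrow> real) \<Rightarrow> 'a::euclidean_space set \<Rightarrow> bool" where
  "A_J J \<delta> \<Omega> \<longleftrightarrow>
     (\<forall>s\<ge>0. J s \<ge> 0) \<and>
     set_borel_measurable lborel {0..} J \<and>
     bounded (supp_on {0..} J) \<and>
     emeasure lborel (supp_on {0..} J) > 0 \<and>
     J_covering J \<delta> \<Omega> \<and>
     (\<integral>\<^sup>+ z. ennreal (J (norm z)) \<partial>(lborel :: 'a measure)) = 1 \<and>
     (\<forall>y\<in>closure \<Omega>. ((\<lambda>z. L1dist_on \<Omega> (\<lambda>w. J (\<delta> y w)) (\<lambda>w. J (\<delta> z w))) \<longlongrightarrow> 0)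
                         (at y within closure \<Omega>)) \<and>
     (\<exists>M. AE x in lborel. x \<in> \<Omega> \<longrightarrow> calJ J \<delta> \<Omega> x \<le> ennreal M)"

definition A_TW :: "'m::euclidean_space itself \<Rightarrow> (real \<Rightarrow> real) \<Rightarrow> (real \<Rightarrow> real) \<Rightarrow> (real \<Rightarrow> real) \<Rightarrow> real \<Rightarrow> bool" where
  "A_TW _ J f \<phi> c \<longleftrightarrow>
     continuous_on UNIV \<phi> \<and> strict_mono \<phi> \<and> c > 0 \<and>
     (\<forall>s. (\<phi> has_real_derivative
            (conv (J1 J TYPE('m)) \<phi> s - \<phi> s + f (\<phi> s)) / c) (at s)) \<and>
     (\<phi> \<longlongrightarrow> 0) at_bot \<and> (\<phi> \<longlongrightarrow> 1) at_top"

definition A_nd :: "(real \<Rightarrow> real) \<Rightarrow> (real \<Rightarrow> real) \<Rightarrow> ('a \<Rightarrow> 'a \<Rightarrow> real) \<Rightarrow> 'a::euclidean_space set \<Rightarrow> bool" where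
  "A_nd J f' \<delta> \<Omega> \<longleftrightarrow> ennreal (Sup (f' ` {0..1})) < (INF x\<in>\<Omega>. calJ J \<delta> \<Omega> x)"

definition Besov_1inf :: "real \<Rightarrow> ('a \<Rightarrow> 'a \<Rightarrow> real) \<Rightarrow> 'a::euclidean_space set \<Rightarrow> (real \<Rightarrow> real) \<Rightarrow> bool" where
  "Besov_1inf \<alpha> \<delta> \<Omega> g \<longleftrightarrow>
     integrable (lborel :: 'a measure) (\<lambda>z. g (norm z)) \<and>
     (\<exists>C. \<forall>y\<in>\<Omega>. \<forall>z\<in>\<Omega>. y \<noteq> z \<longrightarrow>
        L1dist_on \<Omega> (\<lambda>w. g (\<delta> y w)) (\<lambda>w. g (\<delta> z w)) \<le> ennreal (C * dist y z powr \<alpha>))"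

end

theory Submission
  imports Defs
begin


lemma cmp_lemma:
  fixes v w v' w' :: "real \<Rightarrow> real" and a b L :: real
  assumes ab: "a \<le> b"
    and dv: "\<And>t. a \<le> t \<Longrightarrow> t \<le> b \<Longrightarrow> (v has_real_derivative v' t) (at t)"
    and dw: "\<And>t. a \<le> t \<Longrightarrow> t \<le> b \<Longrightarrow> (w has_real_derivative w' t) (at t)"
    and init: "v a \<le> w a"
    and key: "\<And>t. a \<le> t \<Longrightarrow> t \<le> b \<Longrightarrow> v t > w t \<Longrightarrow> v' t - w' t \<le> L * (v t - w t)"
  shows "v b \<le> w b"
proof (rule ccontr)
  assume nb: "\<not> v b \<le> w b"
  define h where "h t = exp(-L*t) * (v t - w t)" for t
  have dh: "(h has_real_derivative exp(-L*t)*((v' t - w' t) - L*(v t - w t))) (at t)"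
    if "a \<le> t" "t \<le> b" for t
  proof -
    have "(h has_real_derivative exp(-L*t) * (-L) * (v t - w t) + exp(-L*t) * (v' t - w' t)) (at t)"
      unfolding h_def
      by (auto intro!: derivative_eq_intros dv dw that)
    then show ?thesis by (simp add: algebra_simps)
  qed
  have cont: "continuous_on {a..b} h"
    by (rule continuous_at_imp_continuous_on) (use dh DERIV_isCont in force)
  define S where "S = {a..b} \<inter> h -` {..0}"
  have clS: "closed S" unfolding S_def
    by (rule continuous_closed_preimage[OF cont]) auto
  have aS: "a \<in> S" using init ab by (auto simp: S_def h_def mult_nonneg_nonpos)
  have bdd: "bdd_above S" unfolding S_def by (rule bdd_aboveI[of _ b]) auto
  define t0 where "t0 = Sup S"
  have t0S: "t0 \<in> S" unfolding t0_def using closed_contains_Sup[OF _ bdd clS] aS by blast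
  have hb: "h b > 0" using nb by (simp add: h_def)
  have t0b: "t0 < b"
  proof -
    have "t0 \<le> b" using t0S by (auto simp: S_def)
    moreover have "t0 \<noteq> b" using t0S hb by (auto simp: S_def)
    ultimately show ?thesis by simp
  qed
  have at0: "a \<le> t0" using t0S by (auto simp: S_def)
  obtain z where z: "t0 < z" "z < b"
    "h b - h t0 = (b - t0) * (exp(-L*z)*((v' z - w' z) - L*(v z - w z)))"
    using MVT2[OF t0b, of h "\<lambda>t. exp(-L*t)*((v' t - w' t) - L*(v t - w t))"] dh at0
    by (meson order.trans less_imp_le)
  have "z \<notin> S" using z(1) cSup_upper[OF _ bdd] unfolding t0_def by force
  then have "h z > 0" using z at0 by (auto simp: S_def)
  then have "v z > w z" by (simp add: h_def zero_less_mult_iff)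
  then have "(v' z - w' z) - L*(v z - w z) \<le> 0" using key[of z] z at0 by auto
  then have "h b - h t0 \<le> 0" using z t0b
    by (simp add: mult_nonneg_nonpos)
  moreover have "h t0 \<le> 0" using t0S by (auto simp: S_def)
  ultimately show False using hb by simp
qed



lemma f_lip_bound:
  assumes "A_f f f' \<theta>"
  shows "\<exists>L\<ge>0. \<forall>v\<in>{\<theta>..1}. f v \<le> L * (v - \<theta>)"
proof -
  from assms obtain Lc where Lc: "\<forall>s\<in>{0..1}. \<forall>t\<in>{0..1}. \<bar>f' s - f' t\<bar> \<le> Lc * \<bar>s - t\<bar>"
    and der: "\<forall>s\<in>{0..1}. (f has_real_derivative f' s) (at s within {0..1})"
    and th: "0 < \<theta>" "\<theta> < 1" "f \<theta> = 0"
    unfolding A_f_def by blast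
  define B where "B = \<bar>f' 0\<bar> + \<bar>Lc\<bar>"
  have fb: "f' s \<le> B" if "s \<in> {0..1}" for s
  proof -
    have "\<bar>f' s - f' 0\<bar> \<le> Lc * \<bar>s - 0\<bar>" using Lc that by (metis atLeastAtMost_iff order_refl zero_le_one)
    also have "\<dots> \<le> \<bar>Lc\<bar>" using that
    proof -
      have "Lc * \<bar>s - 0\<bar> \<le> \<bar>Lc\<bar> * \<bar>s - 0\<bar>" by (simp add: mult_right_mono)
      also have "\<dots> \<le> \<bar>Lc\<bar> * 1" using that by (intro mult_left_mono) auto
      finally show ?thesis by simp
    qed
    finally show ?thesis unfolding B_def by linarith
  qed
  have "\<forall>v\<in>{\<theta>..1}. f v \<le> B * (v - \<theta>)"
  proof
    fix v assume v: "v \<in> {\<theta>..1}"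
    show "f v \<le> B * (v - \<theta>)"
    proof (cases "v = \<theta>")
      case True then show ?thesis using th by simp
    next
      case False
      then have lt: "\<theta> < v" using v by auto
      have "\<exists>x\<in>{\<theta><..<v}. f v - f \<theta> = (\<lambda>h. f' x * h) (v - \<theta>)"
      proof (rule mvt_simple[OF lt])
        fix x assume x: "\<theta> \<le> x" "x \<le> v"
        have "(f has_real_derivative f' x) (at x within {0..1})" using der x th v by auto
        then have "(f has_real_derivative f' x) (at x within {\<theta>..v})"
          by (rule DERIV_subset) (use th v in auto)
        then show "(f has_derivative (\<lambda>h. f' x * h)) (at x within {\<theta>..v})"
          by (simp add: has_field_derivative_def)
      qed
      then obtain x where x: "x \<in> {\<theta><..<v}" "f v - f \<theta> = f' x * (v - \<theta>)" by auto
      have "f' x \<le> B" using fb x th v by auto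
      then show ?thesis using x th lt by (simp add: mult_right_mono)
    qed
  qed
  moreover have "B \<ge> 0" unfolding B_def by simp
  ultimately show ?thesis by blast
qed



lemma J_facts:
  fixes \<Omega> :: "'a::euclidean_space set"
  assumes "A_J J \<delta> \<Omega>"
  shows "\<exists>\<rho>>0. \<forall>s>\<rho>. J s = 0"
    and "\<And>s. s \<ge> 0 \<Longrightarrow> J s \<ge> 0"
    and "\<And>x::'a. integrable lborel (\<lambda>y. J (dist x y))"
    and "\<And>x::'a. integral\<^sup>L lborel (\<lambda>y. J (dist x y)) = 1"
proof -
  from assms have nn: "\<forall>s\<ge>0. J s \<ge> 0" and meas: "set_borel_measurable lborel {0..} J"
    and bd: "bounded (supp_on {0..} J)"
    and one: "(\<integral>\<^sup>+ z. ennreal (J (norm z)) \<partial>(lborel :: 'a measure)) = 1"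
    unfolding A_J_def by auto
  show "\<And>s. s \<ge> 0 \<Longrightarrow> J s \<ge> 0" using nn by auto
  from bd obtain r where r: "\<forall>s\<in>supp_on {0..} J. norm s \<le> r" unfolding bounded_iff by auto
  show "\<exists>\<rho>>0. \<forall>s>\<rho>. J s = 0"
  proof (intro exI[of _ "max r 1"] conjI allI impI)
    fix s :: real assume s: "max r 1 < s"
    show "J s = 0"
    proof (rule ccontr)
      assume "J s \<noteq> 0"
      then have "s \<in> supp_on {0..} J" using s unfolding supp_on_def
        by (intro closure_subset[THEN subsetD]) auto
      then show False using r s by auto
    qed
  qed simp
  define g where "g z = indicator {0..} z *\<^sub>R J z" for z :: real
  have gm: "g \<in> borel_measurable borel" using meas unfolding set_borel_measurable_def g_def by simp
  have gJ: "g (norm z) = J (norm z)" for z :: 'a by (simp add: g_def)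
  have "(\<lambda>z::'a. g (norm z)) \<in> borel_measurable borel"
    by (rule measurable_compose[OF borel_measurable_norm gm])
  then have mJ: "(\<lambda>z::'a. J (norm z)) \<in> borel_measurable borel"
    unfolding gJ .
  have intJ: "integrable lborel (\<lambda>z::'a. J (norm z))"
    by (rule integrableI_nonneg) (use mJ nn one in auto)
  have intJ1: "integral\<^sup>L lborel (\<lambda>z::'a. J (norm z)) = 1"
    by (subst integral_eq_nn_integral) (use mJ nn one in auto)
  fix x :: 'a
  have eq: "(\<lambda>y. J (dist x y)) = (\<lambda>y. J (norm (-x + y)))"
    by (simp add: dist_norm norm_minus_commute)
  have "integrable (distr lborel borel ((+) (-x))) (\<lambda>z::'a. J (norm z))"
    using intJ by (simp add: lborel_distr_plus)
  then show "integrable lborel (\<lambda>y. J (dist x y))"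
    unfolding eq by (subst (asm) integrable_distr_eq) (use mJ in auto)
  have "integral\<^sup>L (distr lborel borel ((+) (-x))) (\<lambda>z::'a. J (norm z)) = 1"
    using intJ1 by (simp add: lborel_distr_plus)
  then show "integral\<^sup>L lborel (\<lambda>y. J (dist x y)) = 1"
    unfolding eq by (subst (asm) integral_distr) (use mJ in auto)
qed



lemma Lop_bound:
  fixes K :: "('a::euclidean_space) set" and u :: "'a \<Rightarrow> real"
  assumes dq: "quasi_euclidean (closure (-K)) \<delta>"
    and AJ: "A_J J \<delta> (-K)"
    and rho: "\<rho> > 0" "\<forall>s>\<rho>. J s = 0"
    and ball: "cball x \<rho> \<subseteq> -K"
    and cont: "continuous_on (closure (-K)) u"
    and ub: "\<forall>y\<in>closure(-K). 0 < u y \<and> u y < 1"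
    and G: "\<forall>y\<in>cball x \<rho>. u y \<le> G"
  shows "Lop J \<delta> (-K) u x \<le> G - u x"
proof -
  have Jnn: "\<And>s. s \<ge> 0 \<Longrightarrow> J s \<ge> 0" and intJ: "\<And>x::'a. integrable lborel (\<lambda>y. J (dist x y))"
    and intJ1: "\<And>x::'a. integral\<^sup>L lborel (\<lambda>y. J (dist x y)) = 1"
    using J_facts[OF AJ] by auto
  have sub: "-K \<subseteq> closure (-K)" by (rule closure_subset)
  have xK: "x \<in> -K" using ball rho(1) by (meson centre_in_cball less_imp_le subsetD)
  have dge: "\<delta> a b \<ge> dist a b" if "a \<in> closure (-K)" "b \<in> closure (-K)" for a b
    using dq that unfolding quasi_euclidean_def by auto
  have deq: "\<delta> a b = dist a b" if "a \<in> closure (-K)" "b \<in> closure (-K)"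
    "closed_segment a b \<subseteq> closure (-K)" for a b
    using dq that unfolding quasi_euclidean_def by auto
  define F where "F y = indicator (-K) y * (J (\<delta> x y) * (u y - u x))" for y
  have Feq: "F y = J (dist x y) * (indicator (cball x \<rho>) y * (u y - u x))" for y
  proof (cases "y \<in> cball x \<rho>")
    case True
    then have yK: "y \<in> -K" using ball by auto
    have "closed_segment x y \<subseteq> cball x \<rho>"
      using True rho by (intro closed_segment_subset) auto
    then have "\<delta> x y = dist x y" using ball sub xK yK by (intro deq) auto
    then show ?thesis using True yK by (simp add: F_def)
  next
    case False
    then have dg: "dist x y > \<rho>" by simp
    show ?thesis
    proof (cases "y \<in> -K")
      case True
      then have "\<delta> x y \<ge> dist x y" using sub xK by (intro dge) auto
      then have "J (\<delta> x y) = 0" using rho dg by auto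
      then show ?thesis using False by (simp add: F_def)
    next
      case False
      then show ?thesis using \<open>y \<notin> cball x \<rho>\<close> by (simp add: F_def)
    qed
  qed
  have contb: "continuous_on (cball x \<rho>) (\<lambda>y. u y - u x)"
    using cont ball sub by (intro continuous_intros) (auto intro: continuous_on_subset)
  have m1: "(\<lambda>y. indicator (cball x \<rho>) y *\<^sub>R (u y - u x)) \<in> borel_measurable borel"
    by (rule borel_measurable_continuous_on_indicator[OF _ contb]) auto
  have m2: "(\<lambda>y. J (dist x y)) \<in> borel_measurable borel"
    using borel_measurable_integrable[OF intJ[of x]] by simp
  have Fm: "F \<in> borel_measurable lborel"
    unfolding Feq using borel_measurable_times[OF m2 m1] by simp
  have Fb: "norm (F y) \<le> norm (J (dist x y))" for y
  proof (cases "y \<in> cball x \<rho>")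
    case True
    then have "y \<in> closure (-K)" using ball sub by auto
    moreover have "x \<in> closure (-K)" using xK sub by auto
    ultimately have "\<bar>u y - u x\<bar> \<le> 1" using ub by (smt (verit))
    moreover have "J (dist x y) \<ge> 0" by (rule Jnn) simp
    ultimately show ?thesis unfolding Feq using True
      by (simp add: abs_mult mult_left_le)
  qed (simp add: Feq)
  have Fint: "integrable lborel F"
    by (rule Bochner_Integration.integrable_bound[OF intJ[of x] Fm]) (use Fb in auto)
  have Fle: "F y \<le> J (dist x y) * (G - u x)" for y
  proof (cases "y \<in> cball x \<rho>")
    case True
    have "J (dist x y) \<ge> 0" by (rule Jnn) simp
    then show ?thesis unfolding Feq using True G by (simp add: mult_left_mono)
  next
    case False
    then have "J (dist x y) = 0" using rho by auto
    then show ?thesis unfolding Feq by simp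
  qed
  have "Lop J \<delta> (-K) u x = integral\<^sup>L lborel F" unfolding Lop_def F_def ..
  also have "\<dots> \<le> integral\<^sup>L lborel (\<lambda>y. J (dist x y) * (G - u x))"
    by (rule integral_mono[OF Fint]) (use intJ Fle in auto)
  also have "\<dots> = G - u x" using intJ1[of x] by simp
  finally show ?thesis .
qed



lemma g_deriv: "((\<lambda>s. 2 * e + exp (L * (s - T)) * (s - T) ^ Suc k / fact (Suc k)) has_real_derivative
   L * (exp (L * (s - T)) * (s - T) ^ Suc k / fact (Suc k)) + exp (L * (s - T)) * (s - T) ^ k / fact k) (at s)"
proof -
  have d1: "((\<lambda>s. exp (L * (s - T))) has_real_derivative exp (L * (s - T)) * L) (at s)"
    by (auto intro!: derivative_eq_intros)
  have d2: "((\<lambda>s. (s - T) ^ Suc k) has_real_derivative real (Suc k) * (s - T) ^ k) (at s)"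
    by (auto intro!: derivative_eq_intros) (cases k, simp_all add: algebra_simps)
  have d3: "((\<lambda>s. exp (L * (s - T)) * (s - T) ^ Suc k) has_real_derivative
      exp (L * (s - T)) * (real (Suc k) * (s - T) ^ k) + exp (L * (s - T)) * L * (s - T) ^ Suc k) (at s)"
    using DERIV_mult[OF d1 d2] by (simp add: algebra_simps)
  have d4: "((\<lambda>s. 2 * e + exp (L * (s - T)) * (s - T) ^ Suc k / fact (Suc k)) has_real_derivative
      0 + (exp (L * (s - T)) * (real (Suc k) * (s - T) ^ k) + exp (L * (s - T)) * L * (s - T) ^ Suc k) / fact (Suc k)) (at s)"
    by (intro DERIV_add DERIV_const DERIV_cdivide d3)
  have eq: "0 + (exp (L * (s - T)) * (real (Suc k) * (s - T) ^ k) + exp (L * (s - T)) * L * (s - T) ^ Suc k) / fact (Suc k)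
     = L * (exp (L * (s - T)) * (s - T) ^ Suc k / fact (Suc k)) + exp (L * (s - T)) * (s - T) ^ k / fact k"
    by (simp add: fact_Suc field_simps del: of_nat_Suc)
  show ?thesis using d4 unfolding eq .
qed

theorem proposition5p5:
  fixes K :: "(real \<times> 'm::euclidean_space) set"
    and \<delta> :: "real \<times> 'm \<Rightarrow> real \<times> 'm \<Rightarrow> real"
    and J f f' \<phi> :: "real \<Rightarrow> real"
    and \<theta> c \<alpha> :: real
    and u :: "real \<Rightarrow> real \<times> 'm \<Rightarrow> real"
  assumes K: "compact K"
    and \<Omega>_conn: "connected (- K)"
    and \<delta>: "quasi_euclidean (closure (- K)) \<delta>"
    and Af: "A_f f f' \<theta>"
    and AJ: "A_J J \<delta> (- K)"
    and ATW: "A_TW TYPE('m) J f \<phi> c"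
    and And: "A_nd J f' \<delta> (- K)"
    and \<alpha>: "0 < \<alpha>" "\<alpha> < 1"
    and JB: "Besov_1inf \<alpha> \<delta> (- K) J"
    and u_cont: "continuous_on (UNIV \<times> closure (- K)) (\<lambda>(t, x). u t x)"
    and u_eq: "\<forall>t. \<forall>x\<in>closure (- K).
        ((\<lambda>s. u s x) has_real_derivative (Lop J \<delta> (- K) (u t) x + f (u t x))) (at t)"
    and u_bounds: "\<forall>t. \<forall>x\<in>closure (- K). 0 < u t x \<and> u t x < 1"
    and u_incr: "\<forall>t. \<forall>x\<in>closure (- K). deriv (\<lambda>s. u s x) t > 0"
    and u_past: "\<forall>\<epsilon>>0. \<exists>T. \<forall>t\<le>T. \<forall>x\<in>closure (- K). \<bar>u t x - \<phi> (fst x + c * t)\<bar> < \<epsilon>"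
  shows "\<forall>t x'. ((\<lambda>x1. u t (x1, x')) \<longlongrightarrow> 0) at_bot \<and> ((\<lambda>x1. u t (x1, x')) \<longlongrightarrow> 1) at_top"
proof -
  define cl where "cl = closure (- K)"
  have sub: "-K \<subseteq> cl" unfolding cl_def by (rule closure_subset)
  obtain \<rho> where rho: "\<rho> > 0" "\<forall>s>\<rho>. J s = 0" using J_facts(1)[OF AJ] by blast
  obtain L where L: "L \<ge> 0" "\<forall>v\<in>{\<theta>..1}. f v \<le> L * (v - \<theta>)" using f_lip_bound[OF Af] by blast
  have th: "0 < \<theta>" "\<theta> < 1" "f \<theta> = 0" "f 0 = 0" "\<forall>s\<in>{0<..<\<theta>}. f s < 0"
    using Af unfolding A_f_def by auto
  have fle0: "f v \<le> 0" if "0 \<le> v" "v \<le> \<theta>" for v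
    proof -
    have "v = 0 \<or> v = \<theta> \<or> v \<in> {0<..<\<theta>}" using that by auto
    then show ?thesis using th by (auto simp del: greaterThanLessThan_iff)
  qed
  obtain B where B: "\<forall>z\<in>K. norm z \<le> B"
    using compact_imp_bounded[OF K] unfolding bounded_iff by auto
  have phi: "(\<phi> \<longlongrightarrow> 0) at_bot" "(\<phi> \<longlongrightarrow> 1) at_top"
    using ATW unfolding A_TW_def by auto
  have mono: "u s x \<le> u t x" if "x \<in> cl" "s \<le> t" for x s t
  proof (cases "s = t")
    case False
    then have "s < t" using that by simp
    have "u s x < u t x"
    proof (rule DERIV_pos_imp_increasing[OF \<open>s < t\<close>])
      fix r assume "s \<le> r" "r \<le> t"
      have d: "((\<lambda>s. u s x) has_real_derivative (Lop J \<delta> (- K) (u r) x + f (u r x))) (at r)"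
        using u_eq that(1) unfolding cl_def by blast
      have "deriv (\<lambda>s. u s x) r = Lop J \<delta> (- K) (u r) x + f (u r x)"
        using d by (rule DERIV_imp_deriv)
      moreover have "deriv (\<lambda>s. u s x) r > 0" using u_incr that(1) unfolding cl_def by blast
      ultimately show "\<exists>y. ((\<lambda>s. u s x) has_real_derivative y) (at r) \<and> y > 0"
        using d by auto
    qed
    then show ?thesis by simp
  qed simp
  have ucont: "continuous_on cl (u t)" for t
  proof -
    have "continuous_on cl ((\<lambda>(t, x). u t x) \<circ> (\<lambda>x. (t, x)))"
      by (rule continuous_on_compose) (auto intro!: continuous_intros continuous_on_subset[OF u_cont] simp: cl_def)
    then show ?thesis by (simp add: o_def)
  qed
  have notK: "z \<notin> K" if "fst z < - B" for z
  proof
    assume "z \<in> K"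
    then have "norm z \<le> B" using B by auto
    moreover have "\<bar>fst z\<bar> \<le> norm z"
      by (metis norm_fst_le prod.collapse real_norm_def)
    ultimately show False using that by linarith
  qed
  show ?thesis
  proof (intro allI conjI)
    fix t1 :: real and x' :: 'm
    show "((\<lambda>x1. u t1 (x1, x')) \<longlongrightarrow> 1) at_top"
    proof (rule tendstoI)
      fix e :: real assume e: "e > 0"
      obtain T0 where T0: "\<forall>t\<le>T0. \<forall>x\<in>cl. \<bar>u t x - \<phi> (fst x + c * t)\<bar> < e/2"
        using u_past e unfolding cl_def by (meson half_gt_zero)
      define s where "s = min t1 T0"
      have "\<forall>\<^sub>F r in at_top. dist (\<phi> r) 1 < e/2" using tendstoD[OF phi(2), of "e/2"] e by simp
      then obtain r1 where r1: "\<forall>r\<ge>r1. dist (\<phi> r) 1 < e/2" unfolding eventually_at_top_linorder by auto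
      show "\<forall>\<^sub>F x1 in at_top. dist (u t1 (x1, x')) 1 < e"
        unfolding eventually_at_top_linorder
      proof (intro exI[of _ "max (r1 - c * s) (\<bar>B\<bar> + 1)"] allI impI)
        fix x1 assume x1: "x1 \<ge> max (r1 - c * s) (\<bar>B\<bar> + 1)"
        have "(x1, x') \<notin> K"
        proof
          assume "(x1, x') \<in> K"
          then have "norm (x1, x') \<le> B" using B by auto
          moreover have "norm x1 \<le> norm (x1, x')" by (rule norm_fst_le)
          ultimately show False using x1 by auto
        qed
        then have p: "(x1, x') \<in> cl" using sub by auto
        have "\<bar>u s (x1, x') - \<phi> (x1 + c * s)\<bar> < e/2" using T0[rule_format, of s "(x1, x')"] p unfolding s_def by simp
        moreover have "dist (\<phi> (x1 + c * s)) 1 < e/2" using r1 x1 by auto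
        moreover have "u s (x1, x') \<le> u t1 (x1, x')" using mono p unfolding s_def by auto
        moreover have "u t1 (x1, x') < 1" using u_bounds p unfolding cl_def by auto
        ultimately show "dist (u t1 (x1, x')) 1 < e" unfolding dist_real_def by linarith
      qed
    qed
    show "((\<lambda>x1. u t1 (x1, x')) \<longlongrightarrow> 0) at_bot"
    proof (rule tendstoI)
      fix e :: real assume e: "e > 0"
      define \<epsilon> where "\<epsilon> = min (e/4) (\<theta>/2)"
      have eps: "\<epsilon> > 0" "\<epsilon> \<le> e/4" "2 * \<epsilon> \<le> \<theta>" using e th unfolding \<epsilon>_def by auto
      obtain T0 where T0: "\<forall>t\<le>T0. \<forall>x\<in>cl. \<bar>u t x - \<phi> (fst x + c * t)\<bar> < \<epsilon>"
        using u_past eps unfolding cl_def by meson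
      define T where "T = min t1 T0"
      have "\<forall>\<^sub>F r in at_bot. dist (\<phi> r) 0 < \<epsilon>" using tendstoD[OF phi(1)] eps by simp
      then obtain r0 where r0: "\<forall>r\<le>r0. dist (\<phi> r) 0 < \<epsilon>" unfolding eventually_at_bot_linorder by auto
      define R where "R = max (c * T - r0) (\<bar>B\<bar> + 1)"
      have initb: "u T x \<le> 2 * \<epsilon>" if "x \<in> cl" "fst x \<le> -R" for x
      proof -
        have "\<bar>u T x - \<phi> (fst x + c * T)\<bar> < \<epsilon>" using T0[rule_format, of T x] that unfolding T_def by simp
        moreover have "dist (\<phi> (fst x + c * T)) 0 < \<epsilon>" using r0 that unfolding R_def by auto
        ultimately show ?thesis unfolding dist_real_def by linarith
      qed
      have notK': "z \<notin> K" if "fst z \<le> -R" for z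
        using notK that unfolding R_def by auto
      define b where "b k s = exp (L * s) * s ^ k / fact k" for k :: nat and s :: real
      define g where "g k s = 2 * \<epsilon> + b k s" for k s
      have bnn: "b k s \<ge> 0" if "s \<ge> 0" for k s unfolding b_def using that by simp
      have claim: "\<forall>t\<ge>T. \<forall>x\<in>cl. fst x \<le> -R - real k * \<rho> \<longrightarrow> u t x \<le> g k (t - T)" for k
      proof (induction k)
        case 0
        show ?case
        proof (intro allI impI ballI)
          fix t x assume "t \<ge> T" "x \<in> cl"
          then have "u t x < 1" "exp (L * (t - T)) \<ge> 1" using u_bounds L(1) unfolding cl_def by auto
          then have "u t x \<le> 2 * \<epsilon> + exp (L * (t - T))" using eps by linarith
          then show "u t x \<le> g 0 (t - T)" unfolding g_def b_def by simp
        qed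
      next
        case (Suc k)
        show ?case
        proof (intro allI impI ballI)
          fix t x assume t: "t \<ge> T" and x: "x \<in> cl" and fx: "fst x \<le> -R - real (Suc k) * \<rho>"
          have ball: "cball x \<rho> \<subseteq> -K" and ballk: "\<forall>y\<in>cball x \<rho>. fst y \<le> -R - real k * \<rho>"
          proof -
            have "fst y \<le> -R - real k * \<rho>" if "y \<in> cball x \<rho>" for y
            proof -
              have "dist (fst x) (fst y) \<le> dist x y" by (rule dist_fst_le)
              then show ?thesis using that fx by (auto simp: dist_real_def algebra_simps)
            qed
            moreover then have "fst y \<le> -R" if "y \<in> cball x \<rho>" for y
              using that rho by (smt (verit) of_nat_0_le_iff mult_nonneg_nonneg)
            ultimately show "cball x \<rho> \<subseteq> -K" "\<forall>y\<in>cball x \<rho>. fst y \<le> -R - real k * \<rho>"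
              using notK' by auto
          qed
          have Lb: "Lop J \<delta> (-K) (u s) x \<le> g k (s - T) - u s x" if "s \<ge> T" for s
          proof (rule Lop_bound[OF \<delta> AJ rho ball])
            show "continuous_on (closure (- K)) (u s)" using ucont unfolding cl_def .
            show "\<forall>y\<in>closure (- K). 0 < u s y \<and> u s y < 1" using u_bounds by auto
            show "\<forall>y\<in>cball x \<rho>. u s y \<le> g k (s - T)"
              using Suc.IH that ballk ball sub by blast
          qed
          have fxR: "fst x \<le> -R" using fx rho by (smt (verit) of_nat_0_le_iff mult_nonneg_nonneg)
          define w where "w s = g (Suc k) (s - T)" for s
          define w' where "w' s = L * b (Suc k) (s - T) + b k (s - T)" for s
          have dw: "(w has_real_derivative w' s) (at s)" for s
            unfolding w_def w'_def g_def b_def by (rule g_deriv)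
          have "u t x \<le> w t"
          proof (rule cmp_lemma[of T t "\<lambda>s. u s x" "\<lambda>s. Lop J \<delta> (- K) (u s) x + f (u s x)" w w' L])
            show "T \<le> t" by fact
            show "((\<lambda>s. u s x) has_real_derivative Lop J \<delta> (- K) (u s) x + f (u s x)) (at s)" for s
              using u_eq x unfolding cl_def by blast
            show "(w has_real_derivative w' s) (at s)" for s by (rule dw)
            show "u T x \<le> w T" using initb[OF x fxR] unfolding w_def g_def b_def by simp
            fix s assume s: "T \<le> s" "s \<le> t" and gt: "u s x > w s"
            have bs: "b (Suc k) (s - T) \<ge> 0" using s by (intro bnn) simp
            have v01: "0 < u s x" "u s x < 1" using u_bounds x unfolding cl_def by auto
            have v2: "u s x > 2 * \<epsilon>" using gt bs unfolding w_def g_def by simp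
            have fv: "f (u s x) \<le> L * (u s x - 2 * \<epsilon>)"
            proof (cases "u s x \<le> \<theta>")
              case True
              then have "f (u s x) \<le> 0" using v01 by (intro fle0) auto
              then show ?thesis using v2 L(1) by (smt (verit) mult_nonneg_nonneg)
            next
              case False
              then have "f (u s x) \<le> L * (u s x - \<theta>)" using L(2) v01 by auto
              also have "\<dots> \<le> L * (u s x - 2 * \<epsilon>)" using eps L(1) by (intro mult_left_mono) auto
              finally show ?thesis .
            qed
            have "Lop J \<delta> (-K) (u s) x \<le> g k (s - T) - u s x" using Lb s by auto
            then show "Lop J \<delta> (- K) (u s) x + f (u s x) - w' s \<le> L * (u s x - w s)"
              using fv v2 unfolding w'_def w_def g_def by (simp add: algebra_simps)
          qed
          then show "u t x \<le> g (Suc k) (t - T)" unfolding w_def .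
        qed
      qed
      define \<tau> where "\<tau> = t1 - T"
      have tau: "\<tau> \<ge> 0" unfolding \<tau>_def T_def by simp
      have "(\<lambda>k. exp (L * \<tau>) * (inverse (fact k) * \<tau> ^ k)) \<longlonglongrightarrow> exp (L * \<tau>) * 0"
        by (intro tendsto_mult tendsto_const summable_LIMSEQ_zero summable_exp)
      then have "\<forall>\<^sub>F k in sequentially. dist (exp (L * \<tau>) * (inverse (fact k) * \<tau> ^ k)) 0 < e/2"
        using e by (intro tendstoD) auto
      then obtain k where k: "dist (exp (L * \<tau>) * (inverse (fact k) * \<tau> ^ k)) 0 < e/2"
        by (meson eventually_sequentially order.refl)
      have bk: "b k \<tau> < e/2" using k tau unfolding b_def by (simp add: dist_real_def field_simps)
      show "\<forall>\<^sub>F x1 in at_bot. dist (u t1 (x1, x')) 0 < e"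
        unfolding eventually_at_bot_linorder
      proof (intro exI[of _ "-R - real k * \<rho>"] allI impI)
        fix x1 assume x1: "x1 \<le> -R - real k * \<rho>"
        have "x1 \<le> -R" using x1 rho by (smt (verit) of_nat_0_le_iff mult_nonneg_nonneg)
        then have "(x1, x') \<notin> K" using notK' by auto
        then have p: "(x1, x') \<in> cl" using sub by auto
        have "t1 \<ge> T" unfolding T_def by simp
        then have "u t1 (x1, x') \<le> g k \<tau>" using claim[of k] p x1 unfolding \<tau>_def by auto
        moreover have "u t1 (x1, x') > 0" using u_bounds p unfolding cl_def by auto
        ultimately show "dist (u t1 (x1, x')) 0 < e" using bk eps unfolding g_def by (simp add: dist_real_def)
      qed
    qed
  qed
qed

end
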